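(* Let $a,b:\mathbb{Z}_{\ge0}\to\mathbb{C}$, $f(z)=\sum_{n\ge0}(-1)^na(n)\binom{z}{n}$, $g(z)=\sum_{n\ge0}(-1)^nb(n)\binom{z}{n}$, let $\rho$ be the abscissa of convergence of $f$, and let $\varepsilon>0$. Suppose (i) $a(m)\ge0$ and $(\Delta^lb)(m)\ge0$ for all $m,l\in\mathbb{Z}_{\ge0}$; (ii) $\rho<0$; (iii) for every $l\in\mathbb{Z}_{\ge0}$, $(\Delta^lb)(m)=O(m^{-(l+\varepsilon)})$ as $m\to\infty$. Then $f(z)g(z)$ is expressed as a Newton series converging for $\mathrm{Re}(z)>\max\{\rho,-\varepsilon\}$: there is a sequence $c$ such that $\sum_{n\ge0}(-1)^nc(n)\binom{z}{n}$ converges and equals $f(z)g(z)$ for $\mathrm{Re}(z)>\max\{\rho,-\varepsilon\}$.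
   Context: $\binom{z}{n}=\frac{z(z-1)\cdots(z-n+1)}{n!}$. The abscissa of convergence of a series $\sum_n(-1)^na(n)\binom{z}{n}$ is the infimum of real $\sigma$ such that the series converges for all $z$ with $\mathrm{Re}(z)>\sigma$. $(\Delta a)(m)=a(m)-a(m+1)$. *)

theory Defs
  imports "HOL-Analysis.Analysis" "HOL-Library.Landau_Symbols" "HOL-Library.Complex_Order"
begin

definition newton_term :: "(nat \<Rightarrow> complex) \<Rightarrow> complex \<Rightarrow> nat \<Rightarrow> complex" where
  "newton_term a z n = (-1) ^ n * a n * (z gchoose n)"

text \<open>Value of the Newton series (meaningful where it converges).\<close>
definition newton_series :: "(nat \<Rightarrow> complex) \<Rightarrow> complex \<Rightarrow> complex" where
  "newton_series a z = (\<Sum>n. newton_term a z n)"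

text \<open>Abscissa of convergence, as an extended real (infimum over the empty set is +\<infinity>,
  an unbounded-below set gives -\<infinity>).\<close>
definition newton_abscissa :: "(nat \<Rightarrow> complex) \<Rightarrow> ereal" where
  "newton_abscissa a = Inf {ereal \<sigma> | \<sigma>. \<forall>z. Re z > \<sigma> \<longrightarrow> summable (newton_term a z)}"

definition fdiff :: "(nat \<Rightarrow> complex) \<Rightarrow> nat \<Rightarrow> complex" where
  "fdiff a m = a m - a (Suc m)"

end

theory Submission
  imports Defs
begin


definition PP :: "'a::field_char_0 \<Rightarrow> nat \<Rightarrow> 'a" where
  "PP u k = pochhammer u k / fact k"

lemma PP_Suc: "PP u (Suc k) * of_nat (Suc k) = (u + of_nat k) * PP u k"
  unfolding PP_def by (simp add: pochhammer_rec' field_simps del: of_nat_Suc)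

lemma binF2: "(m+N choose N) * (m+N+1) = (m+1) * (Suc m + N choose N)"
proof -
  have s1: "(m+N choose N) = (m+N choose m)" using binomial_symmetric[of N "m+N"] by simp
  have s2: "(Suc m + N choose N) = (Suc (m + N) choose Suc m)" using binomial_symmetric[of N "Suc m + N"] by simp
  show ?thesis unfolding s1 s2 using Suc_times_binomial_eq[of "m+N" m] by (simp add: algebra_simps)
qed

lemma binF3: "(m + Suc N choose Suc N) * Suc N = (m+1) * (Suc m + N choose N)"
  using Suc_times_binomial_eq[of "m+N" N] binF2[of m N] by (simp add: algebra_simps)

lemma alg:
  fixes u :: "'a::field_char_0" and d d' :: "nat \<Rightarrow> 'a"
  assumes dd: "\<And>j. d' j = d j - d (Suc j)"
  shows "(u + of_nat m) * (\<Sum>j<Suc N. d j * of_nat (m+j choose j) * PP u (m+j)) =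
    of_nat (m+1) * (\<Sum>j<N. d' j * of_nat (Suc m + j choose j) * PP u (Suc m + j))
    + d N * of_nat (m+N choose N) * (u + of_nat (m+N)) * PP u (m+N)"
proof (induction N)
  case 0
  then show ?case by (simp add: algebra_simps)
next
  case (Suc N)
  define B :: 'a where "B = of_nat (m+N choose N)"
  define B1 :: 'a where "B1 = of_nat (m+Suc N choose Suc N)"
  define B' :: 'a where "B' = of_nat (Suc m+N choose N)"
  define Q :: 'a where "Q = PP u (Suc (m+N))"
  have F2: "B * (of_nat m + of_nat N + 1) = (of_nat m + 1) * B'"
    unfolding B_def B'_def using arg_cong[OF binF2[of m N], of "of_nat :: nat \<Rightarrow> 'a"] by (simp add: algebra_simps)
  have F3: "B1 * (of_nat N + 1) = (of_nat m + 1) * B'"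
    unfolding B1_def B'_def using arg_cong[OF binF3[of m N], of "of_nat :: nat \<Rightarrow> 'a"] by (simp add: algebra_simps)
  have F1: "(u + of_nat (m+N)) * PP u (m+N) = Q * (of_nat m + of_nat N + 1)"
    unfolding Q_def using PP_Suc[of u "m+N"] by (simp add: algebra_simps)
  have e1: "(u + of_nat m) * (\<Sum>j<Suc (Suc N). d j * of_nat (m+j choose j) * PP u (m+j))
     = (u + of_nat m) * (\<Sum>j<Suc N. d j * of_nat (m+j choose j) * PP u (m+j))
       + (u + of_nat m) * d (Suc N) * B1 * Q"
    by (simp add: B1_def Q_def algebra_simps)
  have e2: "(\<Sum>j<Suc N. d' j * of_nat (Suc m + j choose j) * PP u (Suc m + j)) =
     (\<Sum>j<N. d' j * of_nat (Suc m + j choose j) * PP u (Suc m + j)) + (d N - d (Suc N)) * B' * Q"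
    by (simp add: B'_def Q_def dd)
  have e3: "d (Suc N) * of_nat (m + Suc N choose Suc N) * (u + of_nat (m + Suc N)) * PP u (m + Suc N)
     = d (Suc N) * B1 * (u + of_nat m + of_nat N + 1) * Q"
    by (simp add: B1_def Q_def algebra_simps)
  have key: "(u + of_nat m) * d (Suc N) * B1 * Q + d N * B * Q * (of_nat m + of_nat N + 1)
     = of_nat (m+1) * ((d N - d (Suc N)) * B' * Q) + d (Suc N) * B1 * (u + of_nat m + of_nat N + 1) * Q"
  proof -
    have "d N * B * Q * (of_nat m + of_nat N + 1) = d N * Q * (B * (of_nat m + of_nat N + 1))" by (simp add: algebra_simps)
    also have "\<dots> = d N * Q * ((of_nat m + 1) * B')" by (simp add: F2)
    finally have a: "d N * B * Q * (of_nat m + of_nat N + 1) = d N * Q * ((of_nat m + 1) * B')" .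
    have b: "d (Suc N) * B1 * (u + of_nat m + of_nat N + 1) * Q = d (Suc N) * B1 * (u + of_nat m) * Q + d (Suc N) * Q * (B1 * (of_nat N + 1))"
      by (simp add: algebra_simps)
    show ?thesis unfolding a b F3 by (simp add: algebra_simps)
  qed
  have e4: "d N * of_nat (m+N choose N) * (u + of_nat (m+N)) * PP u (m+N) = d N * B * Q * (of_nat m + of_nat N + 1)"
    unfolding B_def using F1 by (metis mult.assoc)
  show ?case
    unfolding e1 Suc.IH e2 e3 e4
    using key by (simp add: algebra_simps)
qed



lemma not_summable_inv: "\<not> summable (\<lambda>n::nat. real n powr (-1))"
  using summable_real_powr_iff[of "-1"] by simp

lemma real_step:
  fixes u0 :: real and d d' :: "nat \<Rightarrow> real" and S :: real
  assumes u0: "u0 > 0" and dnn: "\<And>j. d j \<ge> 0" "\<And>j. d' j \<ge> 0"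
    and dd: "\<And>j. d' j = d j - d (Suc j)"
    and sm: "(\<lambda>j. d j * of_nat (m+j choose j) * PP u0 (m+j)) sums S"
  shows "(\<lambda>j. d' j * of_nat (Suc m+j choose j) * PP u0 (Suc m+j)) sums ((u0 + of_nat m) * S / of_nat (Suc m))"
    and "(\<lambda>N. d N * of_nat (m+N choose N) * (u0 + of_nat (m+N)) * PP u0 (m+N)) \<longlonglongrightarrow> 0"
proof -
  define T where "T = (\<lambda>j. d j * of_nat (m+j choose j) * PP u0 (m+j))"
  define T' where "T' = (\<lambda>j. d' j * of_nat (Suc m+j choose j) * PP u0 (Suc m+j))"
  define B where "B = (\<lambda>N. d N * of_nat (m+N choose N) * (u0 + of_nat (m+N)) * PP u0 (m+N))"
  have PPnn: "\<And>k. PP u0 k \<ge> 0" unfolding PP_def using pochhammer_nonneg[OF u0] by simp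
  have Tnn: "\<And>j. T j \<ge> 0" unfolding T_def using dnn PPnn by simp
  have T'nn: "\<And>j. T' j \<ge> 0" unfolding T'_def using dnn PPnn by simp
  have Bnn: "\<And>j. B j \<ge> 0" unfolding B_def using dnn PPnn u0 by simp
  have id: "\<And>N. (u0 + of_nat m) * (\<Sum>j<Suc N. T j) = of_nat (m+1) * (\<Sum>j<N. T' j) + B N"
    unfolding T_def T'_def B_def by (rule alg[where d=d and d'=d'], rule dd)
  have sT: "summable T" using sm unfolding T_def by (simp add: sums_iff)
  have ST: "S = suminf T" using sm unfolding T_def by (simp add: sums_iff)
  have bnd: "\<And>N. (\<Sum>j<N. T' j) \<le> (u0 + of_nat m) * S / of_nat (Suc m)"
  proof -
    fix N
    have "of_nat (m+1) * (\<Sum>j<N. T' j) \<le> (u0 + of_nat m) * (\<Sum>j<Suc N. T j)"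
      using id[of N] Bnn[of N] by linarith
    also have "\<dots> \<le> (u0 + of_nat m) * S"
      unfolding ST using u0 by (intro mult_left_mono sum_le_suminf[OF sT]) (auto intro: Tnn)
    finally show "(\<Sum>j<N. T' j) \<le> (u0 + of_nat m) * S / of_nat (Suc m)"
      by (simp add: field_simps)
  qed
  have sT': "summable T'"
    by (rule bounded_imp_summable[OF T'nn, where B="(u0 + of_nat m) * S / of_nat (Suc m)"])
       (metis bnd lessThan_Suc_atMost)
  define L where "L = (u0 + of_nat m) * S - of_nat (m+1) * suminf T'"
  have Bl: "\<And>N. B N = (u0 + of_nat m) * (\<Sum>j<Suc N. T j) - of_nat (m+1) * (\<Sum>j<N. T' j)"
    using id by (simp add: algebra_simps)
  have BL: "B \<longlonglongrightarrow> L"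
  proof -
    have "(\<lambda>N. \<Sum>j<Suc N. T j) \<longlonglongrightarrow> S" using sm unfolding T_def sums_def
      by (rule LIMSEQ_Suc)
    moreover have "(\<lambda>N. \<Sum>j<N. T' j) \<longlonglongrightarrow> suminf T'" using sT' by (simp add: summable_LIMSEQ)
    ultimately show ?thesis unfolding Bl L_def by (intro tendsto_intros)
  qed
  have L0: "L = 0"
  proof (rule ccontr)
    assume "L \<noteq> 0"
    moreover have "L \<ge> 0" using BL Bnn by (intro LIMSEQ_le_const) auto
    ultimately have Lp: "L > 0" by simp
    have "eventually (\<lambda>N. B N > L/2) sequentially"
      using BL Lp by (intro order_tendstoD(1)) auto
    then have ev: "eventually (\<lambda>N. norm (L / (2 * (u0 + of_nat m + 1)) * real N powr (-1)) \<le> T N) sequentially"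
    proof (rule eventually_mono[OF eventually_conj[OF _ eventually_ge_at_top[of 1]]])
      fix N :: nat assume a: "L/2 < B N \<and> 1 \<le> N"
      have BT: "B N = (u0 + of_nat m + of_nat N) * T N" unfolding B_def T_def by (simp add: algebra_simps)
      have pos: "u0 + of_nat m + of_nat N > 0" using u0 by simp
      have Tge: "T N \<ge> L / 2 / (u0 + of_nat m + of_nat N)"
        using a BT pos by (simp add: field_simps)
      have N1: "real N \<ge> 1" using a by simp
      have "u0 + of_nat m + of_nat N \<le> (u0 + of_nat m + 1) * of_nat N"
      proof -
        have "(u0 + of_nat m) * 1 \<le> (u0 + of_nat m) * real N"
          using N1 u0 by (intro mult_left_mono) auto
        then show ?thesis by (simp add: algebra_simps)
      qed
      then have "L / (2 * (u0 + of_nat m + 1)) * real N powr (-1) \<le> L / 2 / (u0 + of_nat m + of_nat N)"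
      proof -
        have e: "L / (2 * (u0 + of_nat m + 1)) * real N powr (-1) = L / (2 * ((u0 + of_nat m + 1) * real N))"
          using N1 by (simp add: powr_minus_divide)
        have e2: "L / 2 / (u0 + of_nat m + of_nat N) = L / (2 * (u0 + of_nat m + of_nat N))" by simp
        show ?thesis unfolding e e2
          by (rule divide_left_mono) (use \<open>u0 + of_nat m + of_nat N \<le> _\<close> Lp pos in auto)
      qed
      moreover have "L / (2 * (u0 + of_nat m + 1)) * real N powr (-1) \<ge> 0" using Lp u0 by simp
      ultimately show "norm (L / (2 * (u0 + of_nat m + 1)) * real N powr (-1)) \<le> T N"
        using Tge unfolding real_norm_def by linarith
    qed
    have "summable (\<lambda>N. L / (2 * (u0 + of_nat m + 1)) * real N powr (-1))"
      by (rule summable_comparison_test_ev[OF ev sT])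
    then have "summable (\<lambda>N. real N powr (-1))"
      using Lp u0 by (subst (asm) summable_cmult_iff) auto
    then show False using not_summable_inv by simp
  qed
  have "suminf T' = (u0 + of_nat m) * S / of_nat (Suc m)" using L0 unfolding L_def by (simp add: field_simps)
  then show "(\<lambda>j. d' j * of_nat (Suc m+j choose j) * PP u0 (Suc m+j)) sums ((u0 + of_nat m) * S / of_nat (Suc m))"
    using sT' unfolding T'_def by (simp add: sums_iff)
  show "(\<lambda>N. d N * of_nat (m+N choose N) * (u0 + of_nat (m+N)) * PP u0 (m+N)) \<longlonglongrightarrow> 0"
    using BL L0 unfolding B_def by simp
qed



lemma real_all:
  fixes u0 :: real and dR :: "nat \<Rightarrow> nat \<Rightarrow> real"
  assumes u0: "u0 > 0" and dnn: "\<And>m j. dR m j \<ge> 0"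
    and dd: "\<And>m j. dR (Suc m) j = dR m j - dR m (Suc j)"
    and s0: "summable (\<lambda>j. dR 0 j * PP u0 j)"
  shows "(\<lambda>j. dR m j * of_nat (m+j choose j) * PP u0 (m+j)) sums (PP u0 m * (\<Sum>j. dR 0 j * PP u0 j))"
proof (induction m)
  case 0
  then show ?case using s0 by (simp add: PP_def summable_sums)
next
  case (Suc m)
  have "(\<lambda>j. dR (Suc m) j * of_nat (Suc m+j choose j) * PP u0 (Suc m+j)) sums
     ((u0 + of_nat m) * (PP u0 m * (\<Sum>j. dR 0 j * PP u0 j)) / of_nat (Suc m))"
    by (rule real_step(1)[OF u0 dnn dnn dd Suc.IH])
  moreover have "(u0 + of_nat m) * (PP u0 m * (\<Sum>j. dR 0 j * PP u0 j)) / of_nat (Suc m)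
     = PP u0 (Suc m) * (\<Sum>j. dR 0 j * PP u0 j)"
  proof -
    have h: "(u0 + of_nat m) * PP u0 m = PP u0 (Suc m) * of_nat (Suc m)" using PP_Suc[of u0 m] by simp
    show ?thesis unfolding mult.assoc[symmetric] h by simp
  qed
  ultimately show ?case by simp
qed

lemma real_boundary:
  fixes u0 :: real and dR :: "nat \<Rightarrow> nat \<Rightarrow> real"
  assumes u0: "u0 > 0" and dnn: "\<And>m j. dR m j \<ge> 0"
    and dd: "\<And>m j. dR (Suc m) j = dR m j - dR m (Suc j)"
    and s0: "summable (\<lambda>j. dR 0 j * PP u0 j)"
  shows "(\<lambda>N. dR m N * of_nat (m+N choose N) * (u0 + of_nat (m+N)) * PP u0 (m+N)) \<longlonglongrightarrow> 0"
  by (rule real_step(2)[OF u0 dnn dnn dd real_all[OF u0 dnn dd s0]])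

lemma poch_bound:
  fixes u :: complex and u0 :: real
  assumes u0: "u0 > 0" and ru: "Re u < u0"
  shows "\<exists>M\<ge>0. \<forall>k. norm (pochhammer u k) \<le> M * pochhammer u0 k"
proof -
  define c where "c = u0 - Re u"
  have c: "c > 0" using ru by (simp add: c_def)
  obtain N :: nat where N: "real N \<ge> (Im u)^2 / c + \<bar>u0\<bar> + \<bar>Re u\<bar>"
    using real_arch_simple by blast
  have step: "norm (u + of_nat i) \<le> u0 + of_nat i" if "i \<ge> N" for i
  proof -
    have iN: "real i \<ge> (Im u)^2 / c + \<bar>u0\<bar> + \<bar>Re u\<bar>" using N that by linarith
    have "(Im u)^2 \<le> c * (u0 + Re u + 2 * real i)"
    proof -
      have "(Im u)^2 / c \<le> u0 + Re u + 2 * real i" using iN by linarith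
      then show ?thesis using c by (simp add: divide_le_eq mult.commute)
    qed
    then have "(norm (u + of_nat i))^2 \<le> (u0 + of_nat i)^2"
      unfolding cmod_power2 c_def by (simp add: power2_eq_square algebra_simps)
    moreover have "u0 + of_nat i \<ge> 0" using u0 by simp
    ultimately show ?thesis using power2_le_imp_le by blast
  qed
  define M where "M = (\<Sum>k\<le>N. norm (pochhammer u k) / pochhammer u0 k)"
  have ppos: "\<And>k. pochhammer u0 k > 0" using pochhammer_pos[OF u0] by blast
  have Mk: "norm (pochhammer u k) / pochhammer u0 k \<le> M" if "k \<le> N" for k
    unfolding M_def using ppos that
    by (intro member_le_sum) (auto intro: divide_nonneg_pos)
  have M0: "M \<ge> 0" unfolding M_def using ppos by (intro sum_nonneg) (auto intro: divide_nonneg_pos)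
  have ind: "norm (pochhammer u (N + k)) \<le> M * pochhammer u0 (N + k)" for k
  proof (induction k)
    case 0
    then show ?case using Mk[of N] ppos[of N] by (simp add: divide_le_eq)
  next
    case (Suc k)
    have "norm (pochhammer u (N + Suc k)) = norm (pochhammer u (N + k)) * norm (u + of_nat (N+k))"
      by (simp add: pochhammer_rec' norm_mult)
    also have "\<dots> \<le> (M * pochhammer u0 (N + k)) * (u0 + of_nat (N+k))"
      using Suc.IH step[of "N+k"] M0 ppos[of "N+k"] by (intro mult_mono) auto
    also have "\<dots> = M * pochhammer u0 (N + Suc k)" by (simp add: pochhammer_rec')
    finally show ?case .
  qed
  have "norm (pochhammer u k) \<le> M * pochhammer u0 k" for k
  proof (cases "k \<le> N")
    case True
    then show ?thesis using Mk[of k] ppos[of k] by (simp add: divide_le_eq)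
  next
    case False
    then obtain j where "k = N + j" using le_Suc_ex[of N k] by auto
    then show ?thesis using ind by simp
  qed
  then show ?thesis using M0 by blast
qed

lemma PP_of_real: "PP (complex_of_real x) k = complex_of_real (PP x k)"
  unfolding PP_def by (simp add: pochhammer_of_real)

lemma PP_bound:
  fixes u :: complex and u0 :: real
  assumes u0: "u0 > 0" and ru: "Re u < u0"
  shows "\<exists>M\<ge>0. \<forall>k. norm (PP u k) \<le> M * PP u0 k"
proof -
  obtain M where M: "M \<ge> 0" "\<And>k. norm (pochhammer u k) \<le> M * pochhammer u0 k"
    using poch_bound[OF assms] by blast
  have "norm (PP u k) \<le> M * PP u0 k" for k
    using M(2)[of k] unfolding PP_def by (simp add: norm_divide divide_right_mono)
  then show ?thesis using M(1) by blast
qed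



lemma complex_all:
  fixes u :: complex and u0 :: real and d :: "nat \<Rightarrow> nat \<Rightarrow> complex" and dR :: "nat \<Rightarrow> nat \<Rightarrow> real"
  assumes u0: "u0 > 0" and ru: "Re u < u0"
    and dR: "\<And>m j. d m j = of_real (dR m j)"
    and dnn: "\<And>m j. dR m j \<ge> 0"
    and dd: "\<And>m j. dR (Suc m) j = dR m j - dR m (Suc j)"
    and s0: "summable (\<lambda>j. dR 0 j * PP u0 j)"
  shows "(\<lambda>j. d m j * of_nat (m+j choose j) * PP u (m+j)) sums (PP u m * (\<Sum>j. d 0 j * PP u j))"
proof (induction m)
  obtain M where M: "M \<ge> 0" "\<And>k. norm (PP u k) \<le> M * PP u0 k"
    using PP_bound[OF u0 ru] by blast
  case 0
  have "summable (\<lambda>j. d 0 j * PP u j)"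
  proof (rule summable_comparison_test)
    show "\<exists>N. \<forall>n\<ge>N. norm (d 0 n * PP u n) \<le> M * (dR 0 n * PP u0 n)"
      using M dnn by (auto simp: dR norm_mult intro!: exI[of _ 0])
        (metis mult.left_commute mult_left_mono)
    show "summable (\<lambda>n. M * (dR 0 n * PP u0 n))" using s0 by (rule summable_mult)
  qed
  then show ?case by (simp add: PP_def summable_sums)
next
  obtain M where M: "M \<ge> 0" "\<And>k. norm (PP u k) \<le> M * PP u0 k"
    using PP_bound[OF u0 ru] by blast
  case (Suc m)
  define S where "S = PP u m * (\<Sum>j. d 0 j * PP u j)"
  define T where "T = (\<lambda>j. d m j * of_nat (m+j choose j) * PP u (m+j))"
  define T' where "T' = (\<lambda>j. d (Suc m) j * of_nat (Suc m+j choose j) * PP u (Suc m+j))"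
  define B where "B = (\<lambda>N. d m N * of_nat (m+N choose N) * (u + of_nat (m+N)) * PP u (m+N))"
  define BR where "BR = (\<lambda>N. dR m N * of_nat (m+N choose N) * (u0 + of_nat (m+N)) * PP u0 (m+N))"
  have ddc: "\<And>j. d (Suc m) j = d m j - d m (Suc j)" by (simp add: dR dd)
  have id: "\<And>N. (u + of_nat m) * (\<Sum>j<Suc N. T j) = of_nat (m+1) * (\<Sum>j<N. T' j) + B N"
    unfolding T_def T'_def B_def by (rule alg[where d="d m" and d'="d (Suc m)"], rule ddc)
  have BR0: "BR \<longlonglongrightarrow> 0" unfolding BR_def by (rule real_boundary[OF u0 dnn dd s0])
  define C where "C = 1 + norm u / u0"
  have nb: "norm (u + of_nat k) \<le> C * (u0 + of_nat k)" for k
  proof -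
    have "norm (u + of_nat k) \<le> norm u + of_nat k" using norm_triangle_ineq[of u "of_nat k"] by simp
    also have "\<dots> \<le> C * (u0 + of_nat k)"
    proof -
      have "norm u * of_nat k / u0 \<ge> 0" using u0 by simp
      moreover have "C * (u0 + of_nat k) = u0 + of_nat k + norm u + norm u * of_nat k / u0"
        unfolding C_def using u0 by (simp add: field_simps)
      ultimately show ?thesis using u0 by linarith
    qed
    finally show ?thesis .
  qed
  have C0: "C \<ge> 0" unfolding C_def using u0 by simp
  have B0: "B \<longlonglongrightarrow> 0"
  proof (rule Lim_null_comparison)
    show "\<forall>\<^sub>F N in sequentially. norm (B N) \<le> C * M * BR N"
    proof (intro always_eventually allI)
      fix N
      have "norm (B N) = dR m N * of_nat (m+N choose N) * (norm (u + of_nat (m+N)) * norm (PP u (m+N)))"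
        unfolding B_def using dnn by (simp add: dR norm_mult)
      also have "\<dots> \<le> dR m N * of_nat (m+N choose N) * ((C * (u0 + of_nat (m+N))) * (M * PP u0 (m+N)))"
        using dnn nb[of "m+N"] M(1) M(2)[of "m+N"] u0 C0 by (intro mult_left_mono mult_mono) auto
      also have "\<dots> = C * M * BR N" unfolding BR_def by (simp add: algebra_simps)
      finally show "norm (B N) \<le> C * M * BR N" .
    qed
    show "(\<lambda>N. C * M * BR N) \<longlonglongrightarrow> 0" using tendsto_mult[OF tendsto_const BR0, of "C * M"] by simp
  qed
  have T'eq: "(\<lambda>N. \<Sum>j<N. T' j) = (\<lambda>N. ((u + of_nat m) * (\<Sum>j<Suc N. T j) - B N) / of_nat (Suc m))"
  proof (rule ext)
    fix N
    have e: "(u + of_nat m) * (\<Sum>j<Suc N. T j) - B N = of_nat (Suc m) * (\<Sum>j<N. T' j)"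
      using id[of N] by simp
    show "(\<Sum>j<N. T' j) = ((u + of_nat m) * (\<Sum>j<Suc N. T j) - B N) / of_nat (Suc m)"
      unfolding e by (simp add: eq_divide_eq mult.commute del: of_nat_Suc)
  qed
  have "(\<lambda>N. \<Sum>j<Suc N. T j) \<longlonglongrightarrow> S" using Suc.IH unfolding T_def S_def sums_def by (rule LIMSEQ_Suc)
  then have "(\<lambda>N. ((u + of_nat m) * (\<Sum>j<Suc N. T j) - B N) / of_nat (Suc m)) \<longlonglongrightarrow> ((u + of_nat m) * S - 0) / of_nat (Suc m)"
    by (intro tendsto_intros B0) (auto simp del: of_nat_Suc)
  moreover have "((u + of_nat m) * S - 0) / of_nat (Suc m) = PP u (Suc m) * (\<Sum>j. d 0 j * PP u j)"
  proof -
    have h: "(u + of_nat m) * PP u m = PP u (Suc m) * of_nat (Suc m)" using PP_Suc[of u m] by simp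
    show ?thesis unfolding S_def mult.assoc[symmetric] h by (simp del: of_nat_Suc)
  qed
  ultimately show ?case unfolding sums_def T'eq[symmetric] T'_def by simp
qed



lemma PP_asym:
  fixes u0 :: real assumes u0: "u0 > 0"
  shows "\<exists>C. eventually (\<lambda>n. PP u0 n \<le> C * real n powr (u0 - 1)) sequentially"
proof -
  have G: "Gamma_series u0 \<longlonglongrightarrow> Gamma u0" by (rule Gamma_series_LIMSEQ)
  have Gp: "Gamma u0 > 0" using u0 by simp
  have ev: "eventually (\<lambda>n. Gamma_series u0 n > Gamma u0 / 2) sequentially"
    using G Gp by (intro order_tendstoD(1)) auto
  have "eventually (\<lambda>n. PP u0 n \<le> (2 / Gamma u0) * real n powr (u0 - 1)) sequentially"
    using eventually_conj[OF ev eventually_ge_at_top[of 1]]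
  proof (rule eventually_mono)
    fix n :: nat assume a: "Gamma u0 / 2 < Gamma_series u0 n \<and> 1 \<le> n"
    have n1: "real n \<ge> 1" using a by simp
    have pp: "pochhammer u0 (n+1) > 0" using pochhammer_pos[OF u0] by blast
    have fp: "(fact n :: real) > 0" by simp
    have ex: "exp (u0 * ln (real n)) = real n powr u0" using n1 by (simp add: powr_def)
    have "Gamma u0 / 2 < fact n * real n powr u0 / pochhammer u0 (n+1)"
    proof -
      have "Gamma_series u0 n = fact n * real n powr u0 / pochhammer u0 (n+1)"
        unfolding Gamma_series_def using ex by simp
      then show ?thesis using a by simp
    qed
    then have "pochhammer u0 (n+1) * Gamma u0 < 2 * (fact n * real n powr u0)"
      using pp by (simp add: field_simps)
    then have "pochhammer u0 (n+1) < (2 / Gamma u0) * (fact n * real n powr u0)"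
      using Gp by (simp add: field_simps)
    moreover have "pochhammer u0 (n+1) = pochhammer u0 n * (u0 + real n)"
      by (simp add: pochhammer_rec' mult.commute)
    ultimately have "pochhammer u0 n * (u0 + real n) < (2 / Gamma u0) * (fact n * real n powr u0)" by simp
    moreover have "pochhammer u0 n * real n \<le> pochhammer u0 n * (u0 + real n)"
      using pochhammer_nonneg[OF u0, of n] u0 by (intro mult_left_mono) auto
    ultimately have "pochhammer u0 n * real n \<le> (2 / Gamma u0) * (fact n * real n powr u0)" by simp
    then have "(pochhammer u0 n * real n) / (fact n * real n) \<le> ((2 / Gamma u0) * (fact n * real n powr u0)) / (fact n * real n)"
      using n1 fp by (intro divide_right_mono) auto
    moreover have "(pochhammer u0 n * real n) / (fact n * real n) = pochhammer u0 n / fact n"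
      using n1 by simp
    moreover have "((2 / Gamma u0) * (fact n * real n powr u0)) / (fact n * real n) = (2 / Gamma u0) * (real n powr u0 / real n)"
      using fp by simp
    ultimately have "pochhammer u0 n / fact n \<le> (2 / Gamma u0) * (real n powr u0 / real n)" by simp
    moreover have "real n powr u0 / real n = real n powr (u0 - 1)"
      using n1 by (simp add: powr_diff)
    ultimately show "PP u0 n \<le> (2 / Gamma u0) * real n powr (u0 - 1)" unfolding PP_def by simp
  qed
  then show ?thesis by blast
qed

lemma s0_lemma:
  fixes u0 \<epsilon> :: real and bR :: "nat \<Rightarrow> real"
  assumes u0: "u0 > 0" "u0 < \<epsilon>" and bnn: "\<And>n. bR n \<ge> 0"
    and bO: "eventually (\<lambda>n. bR n \<le> K * real n powr (- \<epsilon>)) sequentially"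
  shows "summable (\<lambda>n. bR n * PP u0 n)"
proof -
  obtain C where C: "eventually (\<lambda>n. PP u0 n \<le> C * real n powr (u0 - 1)) sequentially"
    using PP_asym[OF u0(1)] by blast
  have PPnn: "\<And>k. PP u0 k \<ge> 0" unfolding PP_def using pochhammer_nonneg[OF u0(1)] by simp
  show ?thesis
  proof (rule summable_comparison_test_ev)
    show "eventually (\<lambda>n. norm (bR n * PP u0 n) \<le> (K * C) * real n powr (u0 - 1 - \<epsilon>)) sequentially"
      using eventually_conj[OF bO C]
    proof (rule eventually_mono)
      fix n assume a: "bR n \<le> K * real n powr - \<epsilon> \<and> PP u0 n \<le> C * real n powr (u0 - 1)"
      have "norm (bR n * PP u0 n) = bR n * PP u0 n" using bnn PPnn by simp
      also have "\<dots> \<le> (K * real n powr - \<epsilon>) * (C * real n powr (u0 - 1))"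
        using a bnn PPnn order_trans[OF bnn[of n]] by (intro mult_mono) auto
      also have "\<dots> = (K * C) * real n powr (u0 - 1 - \<epsilon>)"
        by (simp add: powr_add[symmetric] algebra_simps)
      finally show "norm (bR n * PP u0 n) \<le> (K * C) * real n powr (u0 - 1 - \<epsilon>)" .
    qed
    show "summable (\<lambda>n. (K * C) * real n powr (u0 - 1 - \<epsilon>))"
      using u0 by (intro summable_mult) (simp add: summable_real_powr_iff)
  qed
qed



lemma newton_term_PP: "newton_term a z k = a k * PP (-z) k"
  unfolding newton_term_def PP_def gbinomial_pochhammer
  by (simp add: mult.assoc flip: power_mult_distrib)

lemma cnonneg_eq: "(x::complex) \<ge> 0 \<Longrightarrow> x = complex_of_real (Re x) \<and> Re x \<ge> 0"
  by (simp add: less_eq_complex_def complex_eq_iff)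

theorem proposition3p9:
  fixes a b :: "nat \<Rightarrow> complex" and \<epsilon> :: real
  assumes "\<epsilon> > 0"
    and "\<And>m. a m \<ge> 0"
    and "\<And>l m. (fdiff ^^ l) b m \<ge> 0"
    and "newton_abscissa a < 0"
    and "\<And>l. (\<lambda>m. (fdiff ^^ l) b m) \<in> O(\<lambda>m. complex_of_real (real m powr (- (real l + \<epsilon>))))"
  shows "\<exists>c :: nat \<Rightarrow> complex. \<forall>z. ereal (Re z) > max (newton_abscissa a) (ereal (- \<epsilon>)) \<longrightarrow>
           newton_term c z sums (newton_series a z * newton_series b z)"
proof -
  note eps = assms(1) and ann = assms(2) and bnn = assms(3) and rho = assms(4) and bO = assms(5)
  define d where "d = (\<lambda>m. (fdiff ^^ m) b)"
  define dR where "dR = (\<lambda>m j. Re (d m j))"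
  define aR where "aR = (\<lambda>m. Re (a m))"
  have d_eq: "\<And>m j. d m j = of_real (dR m j)" and dnn: "\<And>m j. dR m j \<ge> 0"
    using cnonneg_eq[OF bnn] unfolding d_def dR_def by blast+
  have a_eq: "\<And>m. a m = of_real (aR m)" and aRnn: "\<And>m. aR m \<ge> 0"
    using cnonneg_eq[OF ann] unfolding aR_def by blast+
  have dd: "\<And>m j. dR (Suc m) j = dR m j - dR m (Suc j)"
    unfolding dR_def d_def by (simp add: fdiff_def)
  have d0: "d 0 = b" unfolding d_def by simp
  define c where "c = (\<lambda>k. \<Sum>m\<le>k. a m * d m (k - m) * of_nat (k choose m))"
  show ?thesis
  proof (intro exI[of _ c] allI impI)
    fix z :: complex
    assume zr: "ereal (Re z) > max (newton_abscissa a) (ereal (- \<epsilon>))"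
    have "max (newton_abscissa a) (ereal (- \<epsilon>)) < ereal (min 0 (Re z))"
      using zr rho eps by (auto simp: min_def zero_ereal_def)
    then obtain x0 where x0: "max (newton_abscissa a) (ereal (- \<epsilon>)) < ereal x0" "ereal x0 < ereal (min 0 (Re z))"
      using ereal_dense2 by blast
    define u0 where "u0 = - x0"
    define u where "u = - z"
    have u0: "u0 > 0" "u0 < \<epsilon>" "Re u < u0" using x0 unfolding u0_def u_def by auto
    have "newton_abscissa a < ereal x0" using x0 by simp
    then obtain s where s: "s \<in> {ereal \<sigma> | \<sigma>. \<forall>z. Re z > \<sigma> \<longrightarrow> summable (newton_term a z)}" "s < ereal x0"
      unfolding newton_abscissa_def by (auto simp: Inf_less_iff)
    then obtain \<sigma> where \<sigma>: "s = ereal \<sigma>" "\<And>z. Re z > \<sigma> \<Longrightarrow> summable (newton_term a z)" by blast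
    have sx: "\<sigma> < x0" using s(2) \<sigma>(1) by simp
    have fz: "summable (newton_term a z)" using \<sigma>(2) sx x0 by simp
    have "summable (newton_term a (of_real x0))" using \<sigma>(2) sx by simp
    moreover have "newton_term a (of_real x0) = (\<lambda>m. of_real (aR m * PP u0 m))"
      by (rule ext) (simp add: newton_term_PP a_eq u0_def PP_of_real flip: of_real_minus)
    ultimately have "summable (\<lambda>m. complex_of_real (aR m * PP u0 m))" by (simp only:)
    then have sA: "summable (\<lambda>m. aR m * PP u0 m)" by (subst (asm) summable_complex_of_real)
    obtain K where K: "K > 0" "eventually (\<lambda>n. norm ((fdiff ^^ 0) b n) \<le> K * norm (complex_of_real (real n powr (- (real 0 + \<epsilon>))))) at_top"
      by (rule landau_o.bigE[OF bO[of 0]])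
    have bn: "\<And>n. norm (b n) = dR 0 n"
    proof -
      fix n
      have "b n = complex_of_real (dR 0 n)" using d_eq[of 0 n] unfolding d0 .
      then show "norm (b n) = dR 0 n" using dnn[of 0 n] by simp
    qed
    have s0: "summable (\<lambda>j. dR 0 j * PP u0 j)"
    proof (rule s0_lemma[OF u0(1,2) dnn])
      show "eventually (\<lambda>n. dR 0 n \<le> K * real n powr (- \<epsilon>)) sequentially"
        using K(2) by eventually_elim (simp add: bn)
    qed
    define gR where "gR = (\<Sum>j. dR 0 j * PP u0 j)"
    define gC where "gC = (\<Sum>j. d 0 j * PP u j)"
    obtain M where M: "M \<ge> 0" "\<And>k. norm (PP u k) \<le> M * PP u0 k"
      using PP_bound[OF u0(1,3)] by blast
    have PPnn: "\<And>k. PP u0 k \<ge> 0" unfolding PP_def using pochhammer_nonneg[OF u0(1)] by simp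
    define H where "H = (\<lambda>(m,j). aR m * (dR m j * of_nat (m+j choose j) * PP u0 (m+j)))"
    define h where "h = (\<lambda>(m,j). a m * (d m j * of_nat (m+j choose j) * PP u (m+j)))"
    have Hnn: "\<And>p. H p \<ge> 0" unfolding H_def using aRnn dnn PPnn by auto
    have hH: "\<And>p. norm (h p) \<le> M * H p"
    proof -
      fix p :: "nat \<times> nat"
      obtain m j where p: "p = (m,j)" by fastforce
      have "norm (h p) = aR m * (dR m j * of_nat (m+j choose j) * norm (PP u (m+j)))"
        unfolding p h_def using aRnn dnn by (simp add: a_eq d_eq norm_mult)
      also have "\<dots> \<le> aR m * (dR m j * of_nat (m+j choose j) * (M * PP u0 (m+j)))"
        using aRnn dnn M by (intro mult_left_mono) auto
      also have "\<dots> = M * H p" unfolding p H_def by (simp add: algebra_simps)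
      finally show "norm (h p) \<le> M * H p" .
    qed
    have rowR: "((\<lambda>j. H (m,j)) has_sum (aR m * (PP u0 m * gR))) UNIV" for m
    proof (rule sums_nonneg_imp_has_sum)
      show "(\<lambda>j. H (m,j)) sums (aR m * (PP u0 m * gR))"
        unfolding H_def gR_def using real_all[OF u0(1) dnn dd s0, of m] by (simp add: sums_mult)
    qed (use Hnn in auto)
    have gRnn: "gR \<ge> 0" unfolding gR_def using s0 dnn PPnn by (intro suminf_nonneg) auto
    have "summable (\<lambda>m. aR m * PP u0 m * gR)" using sA by (rule summable_mult2)
    then have sR: "summable (\<lambda>m. aR m * (PP u0 m * gR))" by (simp only: mult.assoc)
    have Rnn: "\<And>m. aR m * (PP u0 m * gR) \<ge> 0" using aRnn PPnn gRnn by simp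
    have RS: "(\<lambda>m. aR m * (PP u0 m * gR)) summable_on UNIV"
      using summable_on_UNIV_nonneg_real_iff[of "\<lambda>m. aR m * (PP u0 m * gR)", OF Rnn] sR by (simp only:)
    have HS: "H summable_on Sigma UNIV (\<lambda>_. UNIV)"
    proof (rule summable_on_SigmaI[where g="\<lambda>m. aR m * (PP u0 m * gR)"])
      show "\<And>x. x \<in> UNIV \<Longrightarrow> ((\<lambda>y. H (x, y)) has_sum aR x * (PP u0 x * gR)) UNIV"
        by (rule rowR)
      show "(\<lambda>m. aR m * (PP u0 m * gR)) summable_on UNIV" by (rule RS)
      show "\<And>x y. x \<in> UNIV \<Longrightarrow> y \<in> UNIV \<Longrightarrow> 0 \<le> H (x, y)" by (rule Hnn)
    qed
    have gabs: "(\<lambda>p. norm (complex_of_real (M * H p))) summable_on UNIV"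
    proof -
      have HS': "H summable_on UNIV" using HS by simp
      have eq: "(\<lambda>p. norm (complex_of_real (M * H p))) = (\<lambda>p. M * H p)"
        by (rule ext) (simp add: norm_mult abs_of_nonneg M(1) Hnn)
      show ?thesis unfolding eq by (rule summable_on_cmult_right[OF HS'])
    qed
    have habs: "(\<lambda>p. norm (h p)) summable_on UNIV"
    proof (rule Infinite_Sum.abs_summable_on_comparison_test[OF gabs])
      show "\<And>p. p \<in> UNIV \<Longrightarrow> norm (h p) \<le> norm (complex_of_real (M * H p))"
        using hH M(1) Hnn by (simp add: norm_mult abs_of_nonneg)
    qed
    have hS: "h summable_on UNIV" by (rule Infinite_Sum.abs_summable_summable[OF habs])
    have rowC: "((\<lambda>j. h (m,j)) has_sum (newton_term a z m * gC)) UNIV" for m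
    proof (rule norm_summable_imp_has_sum)
      show "summable (\<lambda>j. norm (h (m,j)))"
      proof (rule summable_comparison_test)
        show "\<exists>N. \<forall>n\<ge>N. norm (norm (h (m, n))) \<le> M * H (m,n)" using hH by simp
        show "summable (\<lambda>n. M * H (m,n))"
          using has_sum_imp_sums[OF rowR[of m]] by (intro summable_mult) (rule sums_summable)
      qed
      show "(\<lambda>j. h (m,j)) sums (newton_term a z m * gC)"
        unfolding h_def gC_def newton_term_PP u_def[symmetric]
        using sums_mult[OF complex_all[OF u0(1,3) d_eq dnn dd s0, of m], of "a m"]
        by (simp add: mult.assoc)
    qed
    define S where "S = infsum h UNIV"
    have hsum: "(h has_sum S) (Sigma UNIV (\<lambda>_. UNIV))" using hS unfolding S_def by (simp add: has_sum_infsum)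
    have "((\<lambda>m. newton_term a z m * gC) has_sum S) UNIV"
      by (rule has_sum_SigmaD[OF hsum rowC])
    then have "(\<lambda>m. newton_term a z m * gC) sums S" by (rule has_sum_imp_sums)
    moreover have "(\<lambda>m. newton_term a z m * gC) sums (newton_series a z * gC)"
      unfolding newton_series_def using fz by (intro sums_mult2) (simp add: summable_sums)
    ultimately have SS: "S = newton_series a z * newton_series b z"
      using sums_unique2 unfolding gC_def newton_series_def newton_term_PP d0 u_def by blast
    define h' where "h' = (\<lambda>(k,m). h (m, k - m))"
    have "(h' has_sum S) (Sigma UNIV (\<lambda>k. {..k}))"
    proof -
      have "(h' has_sum S) (Sigma UNIV (\<lambda>k. {..k})) = (h has_sum S) UNIV"
        by (rule has_sum_reindex_bij_witness[where i="\<lambda>(m,j). (m+j, m)" and j="\<lambda>(k,m). (m, k-m)"])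
           (auto simp: h'_def)
      then show ?thesis using hsum by simp
    qed
    moreover have "((\<lambda>m. h' (k,m)) has_sum (newton_term c z k)) {..k}" for k
    proof -
      have "(\<Sum>m\<le>k. h' (k,m)) = (\<Sum>m\<le>k. a m * d m (k - m) * of_nat (k choose m) * PP u k)"
      proof (rule sum.cong)
        fix m assume "m \<in> {..k}"
        then have mk: "m \<le> k" by simp
        have e1: "h' (k,m) = a m * (d m (k-m) * of_nat (m + (k-m) choose (k-m)) * PP u (m + (k-m)))"
          by (simp add: h'_def h_def)
        have e2: "(k choose (k - m)) = (k choose m)"
          using mk binomial_symmetric[of m k] by simp
        have e3: "m + (k - m) = k" using mk by simp
        show "h' (k,m) = a m * d m (k - m) * of_nat (k choose m) * PP u k"
          unfolding e1 e3 e2 by (simp only: mult.assoc)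
      qed simp
      also have "\<dots> = newton_term c z k"
        unfolding newton_term_PP c_def u_def by (simp add: sum_distrib_right)
      finally have eq: "(\<Sum>m\<le>k. h' (k,m)) = newton_term c z k" .
      show ?thesis unfolding eq[symmetric] by (rule has_sum_finite) simp
    qed
    ultimately have "(newton_term c z has_sum S) UNIV"
      by (rule has_sum_SigmaD)
    then show "newton_term c z sums (newton_series a z * newton_series b z)"
      using SS by (simp add: has_sum_imp_sums)
  qed
qed

end
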